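(* Let $v\in T$ be a point with at least one irrational coordinate, with itinerary $\mathbb{X}_{a_1},\mathbb{X}_{a_2},\dots$. For $n\ge1$ let $\mathbf{I}_{v,n} = \mathbf{X}_{a_1}^{-1}\mathbf{X}_{a_2}^{-1}\cdots\mathbf{X}_{a_n}^{-1}$ and let $\mathbf{I}_{v,n}V$ be the $3\times 3$ integer matrix with $V = \begin{pmatrix}0&1&1\\0&0&1\\1&1&1\end{pmatrix}$. Then the closed tetrahedron in $\mathbb{R}^3$ whose vertices are the origin and the three columns of $\mathbf{I}_{v,n}V$ contains no point of $\mathbb{Z}^3$ other than its four vertices.
   Context: Let $T = \{(x,y)\in\mathbb{R}^2 : 0 \le y \le x \le 1\}$. For integers $n\ge1$ define $\mathbb{A}_n = \{(x,y) : \frac{1}{n+1} < x \le \frac1n,\ 0 \le y \le 1-nx\}$ and $\mathbb{B}_n = \{(x,y) : 1-nx < y \le x \le \frac1n\}$, and the matrices $\mathbf{A}_n = \begin{pmatrix}-n&0&1\\0&1&0\\1&0&0\end{pmatrix}$, $\mathbf{B}_n=\begin{pmatrix}1-n&-1&1\\1&-1&0\\1&0&0\end{pmatrix}$ (both in $SL(3,\mathbb{Z})$). The 2-dimensional Gauss map $G:T\to T$ is $G(0,0)=(0,0)$ and, writing points as homogeneous vectors $(x,y,1)^T$, $G(v)=\mathbf{A}_n v$ on $\mathbb{A}_n$ and $G(v)=\mathbf{B}_n v$ on $\mathbb{B}_n$ (up to scaling); in affine coordinates $G(x,y)=\left(\frac1x-n,\frac yx\right)$ on $\mathbb{A}_n$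 and $G(x,y)=\left(\frac{1-y}{x}-n+1,\frac{x-y}{x}\right)$ on $\mathbb{B}_n$. For a point $v$ whose forward orbit never hits $(0,0)$, its itinerary is the sequence $\mathbb{X}_{a_1},\mathbb{X}_{a_2},\dots$ ($\mathbb{X}\in\{\mathbb{A},\mathbb{B}\}$) with $G^{k-1}(v)\in\mathbb{X}_{a_k}$, and $\mathbf{X}_{a_k}$ denotes the corresponding matrix $\mathbf{A}_{a_k}$ or $\mathbf{B}_{a_k}$. *)

theory Defs
  imports "HOL-Analysis.Analysis"
begin

definition triT :: "(real \<times> real) set" where
  "triT = {(x, y). 0 \<le> y \<and> y \<le> x \<and> x \<le> 1}"

definition regA :: "nat \<Rightarrow> (real \<times> real) set" where
  "regA n = {(x, y). 1 / (real n + 1) < x \<and> x \<le> 1 / real n \<and> 0 \<le> y \<and> y \<le> 1 - real n * x}"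

definition regB :: "nat \<Rightarrow> (real \<times> real) set" where
  "regB n = {(x, y). 1 - real n * x < y \<and> y \<le> x \<and> x \<le> 1 / real n}"

definition region :: "bool \<Rightarrow> nat \<Rightarrow> (real \<times> real) set" where
  "region b n = (if b then regA n else regB n)"

definition gaussG :: "real \<times> real \<Rightarrow> real \<times> real" where
  "gaussG p = (let (x, y) = p in
     if p = (0, 0) then (0, 0)
     else if (\<exists>n\<ge>1. p \<in> regA n) then
       (let n = (THE n. n \<ge> 1 \<and> p \<in> regA n) in (1 / x - real n, y / x))
     else
       (let n = (THE n. n \<ge> 1 \<and> p \<in> regB n) in ((1 - y) / x - real n + 1, (x - y) / x)))"

text \<open>Itinerary: the k-th letter (k = 0, 1, ...) is the region containing G^k v;
  in the paper's indexing this is X_{a_{k+1}}.\<close>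
definition itin :: "real \<times> real \<Rightarrow> nat \<Rightarrow> bool \<times> nat" where
  "itin v k = (THE bn. snd bn \<ge> 1 \<and> (gaussG ^^ k) v \<in> region (fst bn) (snd bn))"

definition matA :: "nat \<Rightarrow> real^3^3" where
  "matA n = vector [vector [- real n, 0, 1], vector [0, 1, 0], vector [1, 0, 0]]"

definition matB :: "nat \<Rightarrow> real^3^3" where
  "matB n = vector [vector [1 - real n, -1, 1], vector [1, -1, 0], vector [1, 0, 0]]"

definition letterMat :: "bool \<times> nat \<Rightarrow> real^3^3" where
  "letterMat bn = (if fst bn then matA (snd bn) else matB (snd bn))"

fun Imat :: "real \<times> real \<Rightarrow> nat \<Rightarrow> real^3^3" where
  "Imat v 0 = mat 1"
| "Imat v (Suc n) = Imat v n ** matrix_inv (letterMat (itin v n))"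

definition matV :: "real^3^3" where
  "matV = vector [vector [0, 1, 1], vector [0, 0, 1], vector [1, 1, 1]]"

definition integral_point :: "real^3 \<Rightarrow> bool" where
  "integral_point p \<longleftrightarrow> (\<forall>i. p $ i \<in> \<int>)"

end

theory Submission
  imports Defs
begin

definition intm :: "real^3^3 \<Rightarrow> bool" where
  "intm M \<longleftrightarrow> (\<forall>i j. M$i$j \<in> \<int>)"

lemma intm_mult: "intm A \<Longrightarrow> intm B \<Longrightarrow> intm (A ** B)"
  unfolding intm_def matrix_matrix_mult_def by (auto intro!: Ints_sum Ints_mult)

lemma intm_mv: "intm A \<Longrightarrow> integral_point p \<Longrightarrow> integral_point (A *v p)"
  unfolding intm_def integral_point_def matrix_vector_mult_def by (auto intro!: Ints_sum Ints_mult)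

lemma inv_unique:
  fixes A B :: "real^3^3"
  assumes "A ** B = mat 1" "B ** A = mat 1"
  shows "matrix_inv A = B"
proof -
  have "\<exists>C. A ** C = mat 1 \<and> C ** A = mat 1" using assms by blast
  then have C: "A ** matrix_inv A = mat 1 \<and> matrix_inv A ** A = mat 1"
    unfolding matrix_inv_def by (rule someI_ex)
  have "matrix_inv A = matrix_inv A ** (A ** B)" using assms by simp
  also have "\<dots> = B" using C by (simp add: matrix_mul_assoc)
  finally show ?thesis .
qed

definition invA :: "nat \<Rightarrow> real^3^3" where
  "invA n = vector [vector [0, 0, 1], vector [0, 1, 0], vector [1, 0, real n]]"
definition invB :: "nat \<Rightarrow> real^3^3" where
  "invB n = vector [vector [0, 0, 1], vector [0, -1, 1], vector [1, -1, real n]]"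
definition invV :: "real^3^3" where
  "invV = vector [vector [-1, 0, 1], vector [1, -1, 0], vector [0, 1, 0]]"

lemmas mm = matrix_matrix_mult_def mat_def vec_eq_iff forall_3 sum_3

lemma A1: "matA n ** invA n = mat 1" unfolding matA_def invA_def mm by simp
lemma A2: "invA n ** matA n = mat 1" unfolding matA_def invA_def mm by simp
lemma B1: "matB n ** invB n = mat 1" unfolding matB_def invB_def mm by (simp add: algebra_simps)
lemma B2: "invB n ** matB n = mat 1" unfolding matB_def invB_def mm by (simp add: algebra_simps)
lemma V2: "invV ** matV = mat 1" unfolding matV_def invV_def mm by simp

lemma intm3: "intm (vector [vector [a,b,c], vector [d,e,f], vector [g,h,k]])"
  if "a \<in> \<int>" "b \<in> \<int>" "c \<in> \<int>" "d \<in> \<int>" "e \<in> \<int>" "f \<in> \<int>" "g \<in> \<int>" "h \<in> \<int>" "k \<in> \<int>"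
  using that unfolding intm_def forall_3 by simp

lemma letter_props:
  "intm (letterMat bn) \<and> intm (matrix_inv (letterMat bn)) \<and>
   letterMat bn ** matrix_inv (letterMat bn) = mat 1"
proof (cases "fst bn")
  case True
  then show ?thesis unfolding letterMat_def
    using inv_unique[OF A1 A2] A1 unfolding matA_def invA_def
    by (auto intro!: intm3 simp: Ints_minus)
next
  case False
  then show ?thesis unfolding letterMat_def
    using inv_unique[OF B1 B2] B1 unfolding matB_def invB_def
    by (auto intro!: intm3 simp: Ints_minus Ints_diff)
qed

lemma Imat_props: "intm (Imat v n) \<and> (\<exists>J. intm J \<and> J ** Imat v n = mat 1)"
proof (induction n)
  case 0
  have "intm (mat 1 :: real^3^3)" unfolding intm_def mat_def by simp
  then show ?case by (auto intro!: exI[of _ "mat 1"])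
next
  case (Suc n)
  then obtain J where J: "intm J" "J ** Imat v n = mat 1" by blast
  let ?X = "letterMat (itin v n)"
  have X: "intm ?X" "intm (matrix_inv ?X)" "?X ** matrix_inv ?X = mat 1"
    using letter_props by blast+
  have "(?X ** J) ** (Imat v n ** matrix_inv ?X) = ?X ** (J ** Imat v n) ** matrix_inv ?X"
    by (simp add: matrix_mul_assoc)
  also have "\<dots> = mat 1" using J X by simp
  finally show ?case using Suc X J by (auto intro!: intm_mult)
qed

theorem mainTheorem12:
  fixes x y :: real and n :: nat
  assumes "(x, y) \<in> triT"
    and "x \<notin> \<rat> \<or> y \<notin> \<rat>"
    and "n \<ge> 1"
  shows "\<forall>p \<in> convex hull {0, column 1 (Imat (x, y) n ** matV),
                               column 2 (Imat (x, y) n ** matV),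
                               column 3 (Imat (x, y) n ** matV)}.
           integral_point p \<longrightarrow>
           p \<in> {0, column 1 (Imat (x, y) n ** matV),
                   column 2 (Imat (x, y) n ** matV),
                   column 3 (Imat (x, y) n ** matV)}"
proof (intro ballI impI)
  fix p
  define M where "M = Imat (x, y) n ** matV"
  obtain J where J: "intm J" "J ** Imat (x, y) n = mat 1" using Imat_props by blast
  have JM: "(invV ** J) ** M = mat 1"
  proof -
    have "(invV ** J) ** M = invV ** (J ** Imat (x, y) n) ** matV"
      unfolding M_def by (simp add: matrix_mul_assoc)
    then show ?thesis using J V2 by simp
  qed
  have iJ: "intm (invV ** J)"
    using J unfolding invV_def by (auto intro!: intm_mult intm3)
  assume p: "p \<in> convex hull {0, column 1 M, column 2 M, column 3 M}"
  assume ip: "integral_point p"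
  obtain u t b where uv: "0 \<le> u" "0 \<le> t" "u + t = 1"
      "b \<in> convex hull {column 1 M, column 2 M, column 3 M}" "p = u *\<^sub>R 0 + t *\<^sub>R b"
    using p by (subst (asm) convex_hull_insert) auto
  obtain a1 a2 a3 where a: "0 \<le> a1" "0 \<le> a2" "0 \<le> a3" "a1 + a2 + a3 = 1"
    "b = a1 *\<^sub>R column 1 M + a2 *\<^sub>R column 2 M + a3 *\<^sub>R column 3 M"
    using uv(4) unfolding convex_hull_3 by blast
  define l :: "real^3" where "l = vector [t * a1, t * a2, t * a3]"
  have pl: "p = M *v l"
    unfolding matrix_mult_sum sum_3 l_def uv(5) a(5)
    by (simp add: vec_eq_iff scalar_mult_eq_scaleR algebra_simps)
  have "(invV ** J) *v p = l" unfolding pl matrix_vector_mul_assoc JM by simp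
  then have il: "integral_point l" using intm_mv[OF iJ ip] by simp
  have l1: "t * a1 \<in> \<int>" "t * a2 \<in> \<int>" "t * a3 \<in> \<int>"
    using il unfolding integral_point_def l_def by (metis vector_3)+
  have nn: "0 \<le> t * a1" "0 \<le> t * a2" "0 \<le> t * a3" using uv a by auto
  have s: "t * a1 + t * a2 + t * a3 \<le> 1"
  proof -
    have "t * a1 + t * a2 + t * a3 = t * (a1 + a2 + a3)" by (simp add: algebra_simps)
    also have "\<dots> = t" using a(4) by simp
    finally have "t * a1 + t * a2 + t * a3 = t" .
    then show ?thesis using uv by linarith
  qed
  have cases: "l = 0 \<or> l = vector [1,0,0] \<or> l = vector [0,1,0] \<or> l = vector [0,0,1]"
  proof -
    have r01: "\<And>r::real. r \<in> \<int> \<Longrightarrow> 0 \<le> r \<Longrightarrow> r \<le> 1 \<Longrightarrow> r = 0 \<or> r = 1"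
    proof -
      fix r :: real assume "r \<in> \<int>" "0 \<le> r" "r \<le> 1"
      then obtain k where k: "r = of_int k" by (auto elim: Ints_cases)
      with \<open>0 \<le> r\<close> \<open>r \<le> 1\<close> have "0 \<le> k" "k \<le> 1" by simp_all
      then have "k = 0 \<or> k = 1" by arith
      then show "r = 0 \<or> r = 1" using k by auto
    qed
    have "t * a1 \<le> 1" "t * a2 \<le> 1" "t * a3 \<le> 1" using nn s by linarith+
    then have "(t * a1 = 0 \<or> t * a1 = 1) \<and> (t * a2 = 0 \<or> t * a2 = 1) \<and> (t * a3 = 0 \<or> t * a3 = 1)"
      using l1 nn r01 by blast
    then show ?thesis using s unfolding l_def by (auto simp: vec_eq_iff forall_3)
  qed
  then show "p \<in> {0, column 1 M, column 2 M, column 3 M}"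
    unfolding pl by (auto simp: matrix_mult_sum sum_3 scalar_mult_eq_scaleR)
qed

end
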